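(* Let $\pi_n,\pi\in\mathcal P(\mathbb R^d)$ and let $Q_n,Q$ be $M$-cell quantizers. If $\pi_nQ_n\to\pi Q$ in total variation, then for every $m\in\{1,\dots,M\}$ with $\pi(Q^{-1}(m))>0$ we have $\hat\pi(m,\pi_n,Q_n)\to\hat\pi(m,\pi,Q)$ in total variation.
   Context: Let $\phi(\cdot|x)$, $x\in\mathbb R^d$, be a family of probability densities on $\mathbb R^d$ (the transition densities of the source $x_{t+1}=f(x_t,w_t)$), jointly measurable and uniformly bounded: $\phi(z|x)\le C$ for all $x,z$. An $M$-cell quantizer is a Borel map $Q:\mathbb R^d\to\{1,\dots,M\}$; for $P\in\mathcal P(\mathbb R^d)$, $PQ$ is the measure on $\mathbb R^d\times\{1,\dots,M\}$ with $PQ(A\times\{i\})=P(A\cap Q^{-1}(i))$. For $\pi\in\mathcal P(\mathbb R^d)$, a quantizer $Q$ and $m$ with $\pi(Q^{-1}(m))>0$, $\hat\pi(m,\pi,Q)$ is the probability measure with density $$z\mapsto\frac{1}{\pi(Q^{-1}(m))}\int_{Q^{-1}(m)}\phi(z|x)\,\pi(dx)$$ (the conditional law of $x_{t+1}$ given $\pi_t=\pi$, $Q_t=Q$, $q_t=m$). *)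

theory Defs
  imports "HOL-Probability.Probability"
begin

definition quantizer :: "nat \<Rightarrow> ('a::topological_space \<Rightarrow> nat) \<Rightarrow> bool" where
  "quantizer M Q \<longleftrightarrow> Q \<in> borel \<rightarrow>\<^sub>M count_space {1..M}"

text \<open>The joint measure PQ on R^d x {1..M}: PQ(A x {i}) = P(A \<inter> Q^{-1}(i)).\<close>
definition quant_joint :: "nat \<Rightarrow> 'a::topological_space measure \<Rightarrow> ('a \<Rightarrow> nat) \<Rightarrow> ('a \<times> nat) measure" where
  "quant_joint M P Q = distr P (borel \<Otimes>\<^sub>M count_space {1..M}) (\<lambda>x. (x, Q x))"

definition tv_dist :: "'a measure \<Rightarrow> 'a measure \<Rightarrow> real" where
  "tv_dist \<mu> \<nu> = (SUP A \<in> sets \<mu>. \<bar>measure \<mu> A - measure \<nu> A\<bar>)"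

text \<open>The predictor pi-hat(m, pi, Q): the measure on R^d with density
  z \<mapsto> (1 / pi(Q^{-1}(m))) * integral over Q^{-1}(m) of phi(z|x) pi(dx).
  Here phi x z stands for phi(z|x).\<close>
definition pred_meas :: "('a::euclidean_space \<Rightarrow> 'a \<Rightarrow> real) \<Rightarrow> nat \<Rightarrow> 'a measure \<Rightarrow> ('a \<Rightarrow> nat) \<Rightarrow> 'a measure" where
  "pred_meas \<phi> m \<pi> Q = density lborel
     (\<lambda>z. ennreal ((1 / measure \<pi> (Q -` {m})) * (LINT x : Q -` {m} | \<pi>. \<phi> x z)))"

end

theory Submission
  imports Defs
begin

lemma count_floor:
  fixes y :: real and k :: nat
  assumes "0 \<le> y" "y \<le> k"
  shows "(\<Sum>j\<in>{1..k}. indicator {j. real j \<le> y} j :: real) = real (nat \<lfloor>y\<rfloor>)"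
proof -
  have seq: "{1..k} \<inter> {j. real j \<le> y} = {1..nat \<lfloor>y\<rfloor>}"
  proof -
    have "\<lfloor>y\<rfloor> \<le> int k" using assms(2) by (simp add: floor_le_iff)
    then have nk: "nat \<lfloor>y\<rfloor> \<le> k" by simp
    have iff: "\<And>j::nat. real j \<le> y \<longleftrightarrow> j \<le> nat \<lfloor>y\<rfloor>"
    proof -
      fix j :: nat
      have "real j \<le> y \<longleftrightarrow> int j \<le> \<lfloor>y\<rfloor>" by (simp add: le_floor_iff)
      also have "\<dots> \<longleftrightarrow> j \<le> nat \<lfloor>y\<rfloor>" using assms(1) by (simp add: le_nat_iff)
      finally show "real j \<le> y \<longleftrightarrow> j \<le> nat \<lfloor>y\<rfloor>" .
    qed
    show ?thesis
    proof (rule set_eqI)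
      fix j :: nat
      show "j \<in> {1..k} \<inter> {j. real j \<le> y} \<longleftrightarrow> j \<in> {1..nat \<lfloor>y\<rfloor>}"
        unfolding Int_iff mem_Collect_eq atLeastAtMost_iff iff using nk by linarith
    qed
  qed
  have "(\<Sum>j\<in>{1..k}. indicator {j. real j \<le> y} j :: real) = (\<Sum>j\<in>{1..k} \<inter> {j. real j \<le> y}. (1::real))"
  proof -
    have "(\<Sum>j\<in>{1..k} \<inter> {j. real j \<le> y}. (1::real)) = (\<Sum>j\<in>{1..k}. if j \<in> {j. real j \<le> y} then 1 else 0)"
      by (rule sum.inter_restrict) simp
    then show ?thesis unfolding indicator_def of_bool_def by (rule sym)
  qed
  also have "\<dots> = real (nat \<lfloor>y\<rfloor>)" unfolding seq by simp
  finally show ?thesis .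
qed

lemma tv_upper:
  assumes "prob_space \<mu>" "prob_space \<nu>" "A \<in> sets \<mu>"
  shows "\<bar>measure \<mu> A - measure \<nu> A\<bar> \<le> tv_dist \<mu> \<nu>"
  unfolding tv_dist_def
proof (rule cSUP_upper[OF assms(3)])
  show "bdd_above ((\<lambda>A. \<bar>measure \<mu> A - measure \<nu> A\<bar>) ` sets \<mu>)"
  proof (rule bdd_aboveI2)
    fix A
    have "measure \<mu> A \<le> 1" "measure \<nu> A \<le> 1"
      using assms prob_space.prob_le_1 by blast+
    then show "\<bar>measure \<mu> A - measure \<nu> A\<bar> \<le> 1" using measure_nonneg[of \<mu> A] measure_nonneg[of \<nu> A] by linarith
  qed
qed

lemma tv_nonneg:
  assumes "prob_space \<mu>" "prob_space \<nu>"
  shows "0 \<le> tv_dist \<mu> \<nu>"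
  using tv_upper[OF assms sets.empty_sets] by simp

lemma tv_int:
  assumes mu: "prob_space \<mu>" and nu: "prob_space \<nu>" and sets_eq: "sets \<mu> = sets \<nu>"
    and f[measurable]: "f \<in> borel_measurable \<mu>" and f01: "\<And>x. x \<in> space \<mu> \<Longrightarrow> 0 \<le> f x \<and> f x \<le> 1"
  shows "\<bar>(\<integral>x. f x \<partial>\<mu>) - (\<integral>x. f x \<partial>\<nu>)\<bar> \<le> tv_dist \<mu> \<nu>"
proof -
  interpret mu: prob_space \<mu> by fact
  interpret nu: prob_space \<nu> by fact
  have sp: "space \<mu> = space \<nu>" using sets_eq by (rule sets_eq_imp_space_eq)
  have fnu[measurable]: "f \<in> borel_measurable \<nu>" using f measurable_cong_sets[OF sets_eq refl] by blast
  have f01': "\<And>x. x \<in> space \<nu> \<Longrightarrow> 0 \<le> f x \<and> f x \<le> 1" using f01 sp by auto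
  have key: "\<bar>(\<integral>x. f x \<partial>\<mu>) - (\<integral>x. f x \<partial>\<nu>)\<bar> \<le> tv_dist \<mu> \<nu> + 2 / real k" if k: "k > 0" for k :: nat
  proof -
    define S where "S j = {x \<in> space \<mu>. real j \<le> real k * f x}" for j :: nat
    have S_sets: "S j \<in> sets \<mu>" for j unfolding S_def by measurable
    have S_sets': "S j \<in> sets \<nu>" for j using S_sets sets_eq by simp
    define s where "s x = (\<Sum>j\<in>{1..k}. indicator (S j) x) / real k" for x
    have s_bounds: "s x \<le> f x \<and> f x \<le> s x + 1 / real k" if x: "x \<in> space \<mu>" for x
    proof -
      have "(\<Sum>j\<in>{1..k}. indicator (S j) x :: real) = (\<Sum>j\<in>{1..k}. indicator {j. real j \<le> real k * f x} j)"
        by (intro sum.cong) (auto simp: S_def indicator_def x)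
      also have "\<dots> = real (nat \<lfloor>real k * f x\<rfloor>)"
        using f01[OF x] k by (intro count_floor) (auto simp: mult_le_cancel_left1)
      finally have eq: "s x = real (nat \<lfloor>real k * f x\<rfloor>) / real k" by (simp add: s_def)
      have "0 \<le> real k * f x" using f01[OF x] by simp
      then have a1: "real (nat \<lfloor>real k * f x\<rfloor>) \<le> real k * f x" and a2: "real k * f x \<le> real (nat \<lfloor>real k * f x\<rfloor>) + 1"
        by (simp_all add: of_nat_floor)
      have kp: "0 < real k" using k by simp
      have "s x \<le> f x" unfolding eq using a1 kp by (simp add: divide_le_eq mult.commute)
      moreover have "f x \<le> (real (nat \<lfloor>real k * f x\<rfloor>) + 1) / real k"
        using a2 kp by (simp add: le_divide_eq mult.commute)
      ultimately show ?thesis unfolding eq by (simp add: add_divide_distrib)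
    qed
    have s_meas[measurable]: "s \<in> borel_measurable \<mu>" unfolding s_def using S_sets by measurable
    have int_s: "(\<integral>x. s x \<partial>M) = (\<Sum>j\<in>{1..k}. measure M (S j)) / real k"
      if "prob_space M" "\<And>j. S j \<in> sets M" for M
    proof -
      interpret M: prob_space M by fact
      have ii: "integrable M (indicator (S j) :: _ \<Rightarrow> real)" for j
        using that(2) by (intro integrable_real_indicator) (auto simp: less_top[symmetric])
      have "(\<integral>x. (\<Sum>j\<in>{1..k}. indicator (S j) x :: real) \<partial>M) = (\<Sum>j\<in>{1..k}. (\<integral>x. indicator (S j) x \<partial>M))"
        using ii by simp
      also have "\<dots> = (\<Sum>j\<in>{1..k}. measure M (S j))"
        using that(2) by (intro sum.cong refl) (simp add: sets.Int_space_eq2)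
      finally show ?thesis unfolding s_def by simp
    qed
    have diff_s: "\<bar>(\<integral>x. s x \<partial>\<mu>) - (\<integral>x. s x \<partial>\<nu>)\<bar> \<le> tv_dist \<mu> \<nu>"
    proof -
      have "\<bar>(\<integral>x. s x \<partial>\<mu>) - (\<integral>x. s x \<partial>\<nu>)\<bar> = \<bar>\<Sum>j\<in>{1..k}. measure \<mu> (S j) - measure \<nu> (S j)\<bar> / real k"
        using int_s[OF mu S_sets] int_s[OF nu S_sets'] by (simp add: sum_subtractf diff_divide_distrib[symmetric] abs_divide)
      also have "\<dots> \<le> (\<Sum>j\<in>{1..k}. \<bar>measure \<mu> (S j) - measure \<nu> (S j)\<bar>) / real k"
        by (intro divide_right_mono sum_abs) simp
      also have "\<dots> \<le> (\<Sum>j\<in>{1..k}. tv_dist \<mu> \<nu>) / real k"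
        by (intro divide_right_mono sum_mono tv_upper[OF mu nu S_sets]) simp
      also have "\<dots> = tv_dist \<mu> \<nu>" using k by simp
      finally show ?thesis .
    qed
    have approx: "\<bar>(\<integral>x. f x \<partial>M) - (\<integral>x. s x \<partial>M)\<bar> \<le> 1 / real k"
      if "prob_space M" "space M = space \<mu>" "f \<in> borel_measurable M" "s \<in> borel_measurable M" for M
    proof -
      interpret M: prob_space M by fact
      have s0: "0 \<le> s x" for x unfolding s_def by (simp add: sum_nonneg)
      have fb: "\<And>x. x \<in> space M \<Longrightarrow> norm (f x) \<le> 1" using that(2) f01 by auto
      have sb: "\<And>x. x \<in> space M \<Longrightarrow> norm (s x) \<le> 1"
      proof -
        fix x assume "x \<in> space M"
        then have "x \<in> space \<mu>" using that(2) by simp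
        then show "norm (s x) \<le> 1" using s_bounds[of x] f01[of x] s0[of x] by simp
      qed
      have bf: "integrable M f"
        using fb that(3) by (intro M.integrable_const_bound[where B=1] AE_I2) auto
      have bs: "integrable M s"
        using sb that(4) by (intro M.integrable_const_bound[where B=1] AE_I2) auto
      have "(\<integral>x. f x \<partial>M) - (\<integral>x. s x \<partial>M) = (\<integral>x. f x - s x \<partial>M)" by (rule Bochner_Integration.integral_diff[OF bf bs, symmetric])
      moreover have "0 \<le> (\<integral>x. f x - s x \<partial>M)"
      proof (rule integral_nonneg_AE, rule AE_I2)
        fix x assume "x \<in> space M"
        then have "x \<in> space \<mu>" using that(2) by simp
        then show "0 \<le> f x - s x" using s_bounds[of x] by simp
      qed
      moreover have "(\<integral>x. f x - s x \<partial>M) \<le> (\<integral>x. 1 / real k \<partial>M)"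
      proof (rule integral_mono)
        show "integrable M (\<lambda>x. f x - s x)" using bf bs by simp
        show "integrable M (\<lambda>x. 1 / real k)" by (rule M.integrable_const)
        fix x assume "x \<in> space M"
        then have "x \<in> space \<mu>" using that(2) by simp
        then show "f x - s x \<le> 1 / real k" using s_bounds[of x] by simp
      qed
      moreover have "(\<integral>x. 1 / real k \<partial>M) = 1 / real k"
        using M.prob_space by (simp add: lebesgue_integral_const)
      ultimately show ?thesis by linarith
    qed
    have sn: "s \<in> borel_measurable \<nu>" using s_meas measurable_cong_sets[OF sets_eq refl] by blast
    have a1: "\<bar>(\<integral>x. f x \<partial>\<mu>) - (\<integral>x. s x \<partial>\<mu>)\<bar> \<le> 1 / real k" by (rule approx[OF mu]) auto
    have a2: "\<bar>(\<integral>x. f x \<partial>\<nu>) - (\<integral>x. s x \<partial>\<nu>)\<bar> \<le> 1 / real k" by (rule approx[OF nu]) (use sp fnu sn in auto)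
    show ?thesis using a1 a2 diff_s by linarith
  qed
  show ?thesis
  proof (rule field_le_epsilon)
    fix e :: real assume e: "0 < e"
    obtain k :: nat where "2 / e < k" using reals_Archimedean2 by blast
    then have kp: "k > 0" using e
      by (metis divide_pos_pos less_trans of_nat_0_less_iff zero_less_numeral)
    have "2 / real k < e" using \<open>2 / e < k\<close> e kp
      by (simp add: divide_less_eq mult.commute)
    with key[OF kp] show "\<bar>(\<integral>x. f x \<partial>\<mu>) - (\<integral>x. f x \<partial>\<nu>)\<bar> \<le> tv_dist \<mu> \<nu> + e" by linarith
  qed
qed

lemma phi_meas_pair:
  fixes \<phi> :: "'a::euclidean_space \<Rightarrow> 'a \<Rightarrow> real"
  assumes phi_meas: "(\<lambda>(x, z). \<phi> x z) \<in> borel_measurable (borel \<Otimes>\<^sub>M borel)"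
    and s: "sets P = sets borel"
  shows "(\<lambda>(x, z). \<phi> x z) \<in> borel_measurable (P \<Otimes>\<^sub>M lborel)"
    and "(\<lambda>(z, x). \<phi> x z) \<in> borel_measurable (lborel \<Otimes>\<^sub>M P)"
proof -
  have e: "sets (P \<Otimes>\<^sub>M lborel) = sets (borel \<Otimes>\<^sub>M borel)"
    by (rule sets_pair_measure_cong) (simp_all add: s)
  show 1: "(\<lambda>(x, z). \<phi> x z) \<in> borel_measurable (P \<Otimes>\<^sub>M lborel)"
    using phi_meas measurable_cong_sets[OF e refl] by blast
  show "(\<lambda>(z, x). \<phi> x z) \<in> borel_measurable (lborel \<Otimes>\<^sub>M P)"
    using measurable_pair_swap[OF 1] by (simp add: case_prod_beta)
qed


definition gA :: "('a::euclidean_space \<Rightarrow> 'a \<Rightarrow> real) \<Rightarrow> 'a set \<Rightarrow> 'a \<Rightarrow> real" where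
  "gA \<phi> A x = enn2real (\<integral>\<^sup>+ z. ennreal (\<phi> x z) * indicator A z \<partial>lborel)"

lemma pred_eq:
  fixes \<phi> :: "'a::euclidean_space \<Rightarrow> 'a \<Rightarrow> real"
  assumes phi_meas: "(\<lambda>(x, z). \<phi> x z) \<in> borel_measurable (borel \<Otimes>\<^sub>M borel)"
    and phi_nonneg: "\<And>x z. 0 \<le> \<phi> x z"
    and phi_density: "\<And>x. (\<integral>\<^sup>+ z. ennreal (\<phi> x z) \<partial>lborel) = 1"
    and phi_bounded: "\<And>x z. \<phi> x z \<le> C"
    and P: "prob_space P" and sP: "sets P = sets borel"
    and B: "Q -` {m} \<in> sets borel"
    and pos: "measure P (Q -` {m}) > 0"
    and A: "A \<in> sets borel"
  shows "measure (pred_meas \<phi> m P Q) A = (1 / measure P (Q -` {m})) * (\<integral>x. indicator (Q -` {m}) x * gA \<phi> A x \<partial>P)"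
    and "0 \<le> gA \<phi> A x" "gA \<phi> A x \<le> 1"
    and "gA \<phi> A \<in> borel_measurable borel"
proof -
  interpret P: prob_space P by fact
  interpret PL: pair_sigma_finite P lborel
    by (simp add: pair_sigma_finite_def P.sigma_finite_measure_axioms lborel.sigma_finite_measure_axioms)
  define B where "B = Q -` {m}"
  define p where "p = measure P B"
  have Bs: "B \<in> sets P" using B sP by (simp add: B_def)
  have pp: "p > 0" using pos by (simp add: p_def B_def)
  note pm = phi_meas_pair[OF phi_meas sP]
  define G where "G x = (\<integral>\<^sup>+ z. ennreal (\<phi> x z) * indicator A z \<partial>lborel)" for x
  have G1: "G x \<le> 1" for x
  proof -
    have "G x \<le> (\<integral>\<^sup>+ z. ennreal (\<phi> x z) \<partial>lborel)"
      unfolding G_def by (intro nn_integral_mono) (simp add: indicator_def)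
    then show ?thesis using phi_density by simp
  qed
  have Gg: "ennreal (gA \<phi> A x) = G x" for x
    using G1[of x] unfolding gA_def G_def[symmetric]
    by (simp add: ennreal_enn2real_if) (metis ennreal_one_neq_top neq_top_trans)
  show g0: "0 \<le> gA \<phi> A x" for x by (simp add: gA_def)
  show g1: "gA \<phi> A x \<le> 1" for x using G1[of x] Gg[of x] by (metis ennreal_le_1)
  have Am: "A \<in> sets lborel" using A by simp
  have pm1[measurable]: "(\<lambda>(x, z). \<phi> x z) \<in> borel_measurable (P \<Otimes>\<^sub>M lborel)" by (rule pm(1))
  have Am'[measurable]: "A \<in> sets lborel" by (rule Am)
  have fm: "(\<lambda>(x, z). ennreal (\<phi> x z) * indicator A z) \<in> borel_measurable (P \<Otimes>\<^sub>M lborel)"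
  proof -
    have "(\<lambda>w. ennreal ((\<lambda>(x, z). \<phi> x z) w) * indicator A (snd w)) \<in> borel_measurable (P \<Otimes>\<^sub>M lborel)"
      by measurable
    then show ?thesis by (simp add: case_prod_beta)
  qed
  have Gm: "G \<in> borel_measurable P"
    unfolding G_def
    by (rule lborel.borel_measurable_nn_integral) (use fm in simp)
  have sPb: "sets P = sets borel" by fact
  show gm: "gA \<phi> A \<in> borel_measurable borel"
  proof -
    have "(\<lambda>x. enn2real (G x)) \<in> borel_measurable P" using Gm by measurable
    then show ?thesis unfolding gA_def G_def[symmetric] using measurable_cong_sets[OF sPb refl] by blast
  qed
  have pm2[measurable]: "(\<lambda>(z, x). \<phi> x z) \<in> borel_measurable (lborel \<Otimes>\<^sub>M P)" by (rule pm(2))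
  have Bs'[measurable]: "B \<in> sets P" by (rule Bs)
  have phx: "(\<lambda>x. \<phi> x z) \<in> borel_measurable P" for z
  proof -
    have "(\<lambda>x. (\<lambda>(x, z). \<phi> x z) (x, z)) \<in> borel_measurable P" by measurable
    then show ?thesis by simp
  qed
  have intg: "integrable P (\<lambda>x. indicator B x * \<phi> x z)" for z
  proof (rule P.integrable_const_bound[where B=C])
    show "AE x in P. norm (indicator B x * \<phi> x z) \<le> C"
      using phi_nonneg phi_bounded order_trans[OF phi_nonneg phi_bounded] by (intro AE_I2) (simp add: indicator_def abs_of_nonneg)
    show "(\<lambda>x. indicator B x * \<phi> x z) \<in> borel_measurable P" using phx Bs by measurable
  qed
  define F where "F z = (\<integral>\<^sup>+ x. ennreal (indicator B x * \<phi> x z) \<partial>P)" for z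
  have FI: "ennreal (\<integral>x. indicator B x * \<phi> x z \<partial>P) = F z" for z
    unfolding F_def
    by (rule nn_integral_eq_integral[symmetric]) (use intg phi_nonneg in \<open>auto intro!: AE_I2 simp: indicator_def\<close>)
  have pred_def': "pred_meas \<phi> m P Q = density lborel (\<lambda>z. ennreal (1 / p) * F z)"
    unfolding pred_meas_def
  proof (intro arg_cong[where f="density lborel"] ext)
    fix z
    have e1: "(LINT x : Q -` {m} | P. \<phi> x z) = (\<integral>x. indicator B x * \<phi> x z \<partial>P)"
      by (simp add: set_lebesgue_integral_def B_def)
    have e2: "0 \<le> (\<integral>x. indicator B x * \<phi> x z \<partial>P)"
      using phi_nonneg by (intro integral_nonneg_AE AE_I2) (simp add: indicator_def)
    have "ennreal (1 / p * (\<integral>x. indicator B x * \<phi> x z \<partial>P)) = ennreal (1 / p) * F z"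
      using pp e2 by (subst ennreal_mult) (simp_all add: FI)
    then show "ennreal (1 / measure P (Q -` {m}) * (LINT x : Q -` {m} | P. \<phi> x z)) = ennreal (1 / p) * F z"
      unfolding e1 p_def B_def .
  qed
  have hm: "(\<lambda>(z, x). ennreal (indicator B x * \<phi> x z)) \<in> borel_measurable (lborel \<Otimes>\<^sub>M P)"
  proof -
    have "(\<lambda>w. ennreal (indicator B (snd w) * (\<lambda>(z, x). \<phi> x z) w)) \<in> borel_measurable (lborel \<Otimes>\<^sub>M P)"
      by measurable
    then show ?thesis by (simp add: case_prod_beta)
  qed
  have Fm[measurable]: "F \<in> borel_measurable lborel"
    unfolding F_def by (rule P.borel_measurable_nn_integral) (use hm in simp)
  have km: "(\<lambda>(x, z). ennreal (indicator B x * \<phi> x z) * indicator A z) \<in> borel_measurable (P \<Otimes>\<^sub>M lborel)"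
  proof -
    have "(\<lambda>w. ennreal (indicator B (fst w) * (\<lambda>(x, z). \<phi> x z) w) * indicator A (snd w)) \<in> borel_measurable (P \<Otimes>\<^sub>M lborel)"
      by measurable
    then show ?thesis by (simp add: case_prod_beta)
  qed
  define J where "J = (\<integral>x. indicator B x * gA \<phi> A x \<partial>P)"
  have J0: "0 \<le> J" unfolding J_def using g0 by (intro integral_nonneg_AE AE_I2) (simp add: indicator_def)
  have gmP: "gA \<phi> A \<in> borel_measurable P" using gm measurable_cong_sets[OF sPb refl] by blast
  have intJ: "integrable P (\<lambda>x. indicator B x * gA \<phi> A x)"
  proof (rule P.integrable_const_bound[where B=1])
    show "AE x in P. norm (indicator B x * gA \<phi> A x) \<le> 1"
      using g0 g1 by (intro AE_I2) (simp add: indicator_def)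
    show "(\<lambda>x. indicator B x * gA \<phi> A x) \<in> borel_measurable P" using gmP Bs by measurable
  qed
  have "emeasure (pred_meas \<phi> m P Q) A = (\<integral>\<^sup>+ z. ennreal (1 / p) * F z * indicator A z \<partial>lborel)"
    unfolding pred_def' using Am by (simp add: emeasure_density)
  also have "\<dots> = ennreal (1 / p) * (\<integral>\<^sup>+ z. F z * indicator A z \<partial>lborel)"
    by (subst nn_integral_cmult[symmetric]) (simp_all add: mult.assoc)
  also have "(\<integral>\<^sup>+ z. F z * indicator A z \<partial>lborel) = (\<integral>\<^sup>+ z. (\<integral>\<^sup>+ x. ennreal (indicator B x * \<phi> x z) * indicator A z \<partial>P) \<partial>lborel)"
    unfolding F_def
  proof (rule nn_integral_cong)
    fix z
    show "(\<integral>\<^sup>+ x. ennreal (indicator B x * \<phi> x z) \<partial>P) * indicator A z = (\<integral>\<^sup>+ x. ennreal (indicator B x * \<phi> x z) * indicator A z \<partial>P)"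
      by (rule nn_integral_multc[symmetric]) (use hm in simp)
  qed
  also have "\<dots> = (\<integral>\<^sup>+ x. (\<integral>\<^sup>+ z. ennreal (indicator B x * \<phi> x z) * indicator A z \<partial>lborel) \<partial>P)"
    by (rule PL.Fubini'[OF km])
  also have "\<dots> = (\<integral>\<^sup>+ x. ennreal (indicator B x * gA \<phi> A x) \<partial>P)"
  proof (rule nn_integral_cong)
    fix x
    show "(\<integral>\<^sup>+ z. ennreal (indicator B x * \<phi> x z) * indicator A z \<partial>lborel) = ennreal (indicator B x * gA \<phi> A x)"
    proof (cases "x \<in> B")
      case True
      then show ?thesis using Gg[of x] by (simp add: G_def)
    next
      case False
      then show ?thesis by simp
    qed
  qed
  also have "\<dots> = ennreal J" unfolding J_def
    by (rule nn_integral_eq_integral[OF intJ]) (use g0 in \<open>auto intro!: AE_I2 simp: indicator_def\<close>)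
  also have "ennreal (1 / p) * ennreal J = ennreal (1 / p * J)"
    using pp J0 by (subst ennreal_mult) simp_all
  finally have "emeasure (pred_meas \<phi> m P Q) A = ennreal (1 / p * J)" .
  then have "measure (pred_meas \<phi> m P Q) A = 1 / p * J"
    using pp J0 by (simp add: measure_def)
  then show "measure (pred_meas \<phi> m P Q) A = (1 / measure P (Q -` {m})) * (\<integral>x. indicator (Q -` {m}) x * gA \<phi> A x \<partial>P)"
    by (simp add: p_def J_def B_def)
qed


lemma tv_bound_const:
  assumes "\<And>A. A \<in> sets \<mu> \<Longrightarrow> \<bar>measure \<mu> A - measure \<nu> A\<bar> \<le> K"
  shows "0 \<le> tv_dist \<mu> \<nu>" "tv_dist \<mu> \<nu> \<le> K"
proof -
  have bdd: "bdd_above ((\<lambda>A. \<bar>measure \<mu> A - measure \<nu> A\<bar>) ` sets \<mu>)"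
    using assms by (intro bdd_aboveI2) auto
  show "0 \<le> tv_dist \<mu> \<nu>"
    unfolding tv_dist_def using cSUP_upper[OF sets.empty_sets bdd] by simp
  show "tv_dist \<mu> \<nu> \<le> K"
    unfolding tv_dist_def using assms by (intro cSUP_least) auto
qed

lemma joint_int:
  fixes Q :: "'a::topological_space \<Rightarrow> nat" and g :: "'a \<Rightarrow> real"
  assumes Q: "quantizer M Q" and P: "prob_space P" and sP: "sets P = sets borel"
    and g: "g \<in> borel_measurable borel"
  shows "prob_space (quant_joint M P Q)"
    and "sets (quant_joint M P Q) = sets (borel \<Otimes>\<^sub>M count_space {1..M})"
    and "(\<integral>w. g (fst w) * indicator {m} (snd w) \<partial>quant_joint M P Q) = (\<integral>x. indicator (Q -` {m}) x * g x \<partial>P)"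
    and "(\<lambda>w. g (fst w) * indicator {m} (snd w)) \<in> borel_measurable (quant_joint M P Q)"
proof -
  have Qm: "Q \<in> P \<rightarrow>\<^sub>M count_space {1..M}"
    using Q unfolding quantizer_def using measurable_cong_sets[OF sP refl] by blast
  have idm: "(\<lambda>x. x) \<in> P \<rightarrow>\<^sub>M borel"
    using measurable_ident_sets[OF sP] .
  have T: "(\<lambda>x. (x, Q x)) \<in> P \<rightarrow>\<^sub>M (borel \<Otimes>\<^sub>M count_space {1..M})"
    by (rule measurable_Pair[OF idm Qm])
  have sj: "sets (quant_joint M P Q) = sets (borel \<Otimes>\<^sub>M count_space {1..M})"
    unfolding quant_joint_def by (rule sets_distr)
  show "prob_space (quant_joint M P Q)"
    unfolding quant_joint_def by (rule prob_space.prob_space_distr[OF P T])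
  show "sets (quant_joint M P Q) = sets (borel \<Otimes>\<^sub>M count_space {1..M})"
    unfolding quant_joint_def by (rule sets_distr)
  have fm: "(\<lambda>w. g (fst w) * indicator {m} (snd w)) \<in> borel_measurable (borel \<Otimes>\<^sub>M count_space {1..M})"
  proof -
    have h1: "(\<lambda>w. g (fst w)) \<in> borel_measurable (borel \<Otimes>\<^sub>M count_space {1..M})"
      using g by measurable
    have h2: "(\<lambda>w. indicator {m} (snd w) :: real) \<in> borel_measurable ((borel :: 'a measure) \<Otimes>\<^sub>M count_space {1..M})"
      by (rule measurable_compose[OF measurable_snd]) (simp add: measurable_count_space_eq1)
    show ?thesis using h1 h2 by (rule borel_measurable_times)
  qed
  show "(\<integral>w. g (fst w) * indicator {m} (snd w) \<partial>quant_joint M P Q) = (\<integral>x. indicator (Q -` {m}) x * g x \<partial>P)"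
    unfolding quant_joint_def
    by (subst integral_distr[OF T fm]) (simp add: indicator_def mult.commute)
  show "(\<lambda>w. g (fst w) * indicator {m} (snd w)) \<in> borel_measurable (quant_joint M P Q)"
    using fm measurable_cong_sets[OF sj refl] by blast
qed

lemma alg_bound:
  fixes In I pn p d :: real
  assumes "\<bar>In - I\<bar> \<le> d" "\<bar>pn - p\<bar> \<le> d" "0 \<le> I" "I \<le> p" "p / 2 < pn" "0 < p"
  shows "\<bar>1 / pn * In - 1 / p * I\<bar> \<le> 4 * d / p"
proof -
  have pn0: "0 < pn" using assms by linarith
  have eq: "1 / pn * In - 1 / p * I = ((In - I) * p + I * (p - pn)) / (pn * p)"
    using pn0 assms(6) by (simp add: field_simps)
  have "\<bar>(In - I) * p + I * (p - pn)\<bar> \<le> \<bar>(In - I) * p\<bar> + \<bar>I * (p - pn)\<bar>"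
    by (rule abs_triangle_ineq)
  also have "\<dots> = \<bar>In - I\<bar> * p + I * \<bar>p - pn\<bar>"
    using assms(3,6) by (simp add: abs_mult)
  also have "\<dots> \<le> d * p + p * d"
    using assms by (intro add_mono mult_mono) (auto simp: abs_minus_commute)
  finally have num: "\<bar>(In - I) * p + I * (p - pn)\<bar> \<le> 2 * d * p" by simp
  have "\<bar>1 / pn * In - 1 / p * I\<bar> = \<bar>(In - I) * p + I * (p - pn)\<bar> / (pn * p)"
    unfolding eq using pn0 assms(6) by (simp add: abs_divide abs_mult)
  also have "\<dots> \<le> 2 * d * p / (pn * p)"
    using num pn0 assms(6) by (intro divide_right_mono) simp_all
  also have "\<dots> = 2 * d / pn" using assms(6) by simp
  also have "\<dots> \<le> 4 * d / p"
  proof -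
    have d0: "0 \<le> d" using assms(1) by linarith
    have "2 * d / pn \<le> 2 * d / (p / 2)"
      using d0 pn0 assms(5,6) by (intro divide_left_mono) simp_all
    then show ?thesis by simp
  qed
  finally show ?thesis .
qed

theorem lemma6:
  fixes \<phi> :: "real^'d \<Rightarrow> real^'d \<Rightarrow> real"
    and C :: real and M m :: nat
    and \<pi> :: "(real^'d) measure" and \<pi>s :: "nat \<Rightarrow> (real^'d) measure"
    and Q :: "real^'d \<Rightarrow> nat" and Qs :: "nat \<Rightarrow> real^'d \<Rightarrow> nat"
  assumes phi_meas: "(\<lambda>(x, z). \<phi> x z) \<in> borel_measurable (borel \<Otimes>\<^sub>M borel)"
    and phi_nonneg: "\<And>x z. 0 \<le> \<phi> x z"
    and phi_density: "\<And>x. (\<integral>\<^sup>+ z. ennreal (\<phi> x z) \<partial>lborel) = 1"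
    and phi_bounded: "\<And>x z. \<phi> x z \<le> C"
    and pi_prob: "prob_space \<pi>" "sets \<pi> = sets borel"
    and pis_prob: "\<And>n. prob_space (\<pi>s n)" "\<And>n. sets (\<pi>s n) = sets borel"
    and Q_quant: "quantizer M Q"
    and Qs_quant: "\<And>n. quantizer M (Qs n)"
    and conv: "(\<lambda>n. tv_dist (quant_joint M (\<pi>s n) (Qs n)) (quant_joint M \<pi> Q)) \<longlonglongrightarrow> 0"
    and m: "m \<in> {1..M}"
    and pos: "measure \<pi> (Q -` {m}) > 0"
  shows "(\<lambda>n. tv_dist (pred_meas \<phi> m (\<pi>s n) (Qs n)) (pred_meas \<phi> m \<pi> Q)) \<longlonglongrightarrow> 0"
  proof -
  let ?Jn = "\<lambda>n. quant_joint M (\<pi>s n) (Qs n)"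
  let ?Jz = "quant_joint M \<pi> Q"
  define \<delta> where "\<delta> n = tv_dist (?Jn n) ?Jz" for n
  define p where "p = measure \<pi> (Q -` {m})"
  define pn where "pn n = measure (\<pi>s n) (Qs n -` {m})" for n
  have vB: "q -` {m} \<in> sets borel" if "quantizer M q" for q :: "real^'d \<Rightarrow> nat"
  proof -
    have "q -` {m} \<inter> space borel \<in> sets borel"
      using that m unfolding quantizer_def by (intro measurable_sets) auto
    then show ?thesis by simp
  qed
  have main: "\<bar>(\<integral>x. indicator (Qs n -` {m}) x * g x \<partial>\<pi>s n) - (\<integral>x. indicator (Q -` {m}) x * g x \<partial>\<pi>)\<bar> \<le> \<delta> n"
    if g: "g \<in> borel_measurable borel" "\<And>x. 0 \<le> g x" "\<And>x. g x \<le> 1" for g n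
  proof -
    note j1 = joint_int[OF Qs_quant[of n] pis_prob(1)[of n] pis_prob(2)[of n] g(1)]
    note j0 = joint_int[OF Q_quant pi_prob g(1)]
    have se: "sets (?Jn n) = sets ?Jz" using j1(2) j0(2) by simp
    have fm: "(\<lambda>w. g (fst w) * indicator {m} (snd w)) \<in> borel_measurable (?Jn n)"
      by (rule j1(4))
    have "\<bar>(\<integral>w. g (fst w) * indicator {m} (snd w) \<partial>?Jn n) - (\<integral>w. g (fst w) * indicator {m} (snd w) \<partial>?Jz)\<bar> \<le> \<delta> n"
      unfolding \<delta>_def
      by (rule tv_int[OF j1(1) j0(1) se fm]) (use g in \<open>auto simp: indicator_def\<close>)
    then show ?thesis using j1(3)[where m=m] j0(3)[where m=m] by simp
  qed
  have pdiff: "\<bar>pn n - p\<bar> \<le> \<delta> n" for n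
  proof -
    have "\<bar>(\<integral>x. indicator (Qs n -` {m}) x * (\<lambda>_. 1::real) x \<partial>\<pi>s n) - (\<integral>x. indicator (Q -` {m}) x * (\<lambda>_. 1::real) x \<partial>\<pi>)\<bar> \<le> \<delta> n"
      by (rule main) auto
    moreover have "space (\<pi>s n) = UNIV" "space \<pi> = UNIV"
      using pis_prob(2)[of n] pi_prob(2) by (auto dest: sets_eq_imp_space_eq)
    ultimately show ?thesis by (simp add: pn_def p_def)
  qed
  have pp: "0 < p" using pos by (simp add: p_def)
  have dd: "\<delta> = (\<lambda>n. tv_dist (quant_joint M (\<pi>s n) (Qs n)) (quant_joint M \<pi> Q))"
    by (rule ext) (simp add: \<delta>_def)
  have d0: "\<delta> \<longlonglongrightarrow> 0" unfolding dd by (rule conv)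
  have ev: "eventually (\<lambda>n. \<delta> n < p / 2) sequentially"
    using order_tendstoD(2)[OF d0, of "p / 2"] pp by simp
  have bound: "0 \<le> tv_dist (pred_meas \<phi> m (\<pi>s n) (Qs n)) (pred_meas \<phi> m \<pi> Q) \<and>
      tv_dist (pred_meas \<phi> m (\<pi>s n) (Qs n)) (pred_meas \<phi> m \<pi> Q) \<le> 4 * \<delta> n / p"
    if dn: "\<delta> n < p / 2" for n
  proof -
    have pnp: "p / 2 < pn n" using pdiff[of n] dn by linarith
    have pnpos: "0 < measure (\<pi>s n) (Qs n -` {m})" using pnp pp by (simp add: pn_def)
    have A_bound: "\<bar>measure (pred_meas \<phi> m (\<pi>s n) (Qs n)) A - measure (pred_meas \<phi> m \<pi> Q) A\<bar> \<le> 4 * \<delta> n / p"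
      if A: "A \<in> sets (pred_meas \<phi> m (\<pi>s n) (Qs n))" for A
    proof -
      have Ab: "A \<in> sets borel" using A by (simp add: pred_meas_def)
      note e1 = pred_eq[OF phi_meas phi_nonneg phi_density phi_bounded pis_prob(1)[of n] pis_prob(2)[of n] vB[OF Qs_quant] pnpos Ab]
      note e0 = pred_eq[OF phi_meas phi_nonneg phi_density phi_bounded pi_prob vB[OF Q_quant] pos Ab]
      have gI: "\<bar>(\<integral>x. indicator (Qs n -` {m}) x * gA \<phi> A x \<partial>\<pi>s n) - (\<integral>x. indicator (Q -` {m}) x * gA \<phi> A x \<partial>\<pi>)\<bar> \<le> \<delta> n"
        by (rule main) (use e0(2,3,4) in auto)
      interpret pi: prob_space \<pi> by (rule pi_prob(1))
      have Bs: "Q -` {m} \<in> sets \<pi>" using vB[OF Q_quant] pi_prob(2) by simp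
      have intg: "integrable \<pi> (\<lambda>x. indicator (Q -` {m}) x * gA \<phi> A x)"
      proof (rule pi.integrable_const_bound[where B=1])
        show "AE x in \<pi>. norm (indicator (Q -` {m}) x * gA \<phi> A x) \<le> 1"
          using e0(2,3) by (intro AE_I2) (simp add: indicator_def)
        have "gA \<phi> A \<in> borel_measurable \<pi>" using e0(4) measurable_cong_sets[OF pi_prob(2) refl] by blast
        then show "(\<lambda>x. indicator (Q -` {m}) x * gA \<phi> A x) \<in> borel_measurable \<pi>" using Bs by measurable
      qed
      have I0: "0 \<le> (\<integral>x. indicator (Q -` {m}) x * gA \<phi> A x \<partial>\<pi>)"
        using e0(2) by (intro integral_nonneg_AE AE_I2) (simp add: indicator_def)
      have "(\<integral>x. indicator (Q -` {m}) x * gA \<phi> A x \<partial>\<pi>) \<le> (\<integral>x. indicator (Q -` {m}) x \<partial>\<pi>)"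
      proof (rule integral_mono[OF intg])
        show "integrable \<pi> (\<lambda>x. indicator (Q -` {m}) x :: real)"
          using Bs by (intro integrable_real_indicator) (auto simp: less_top[symmetric])
        fix x show "indicator (Q -` {m}) x * gA \<phi> A x \<le> indicator (Q -` {m}) x"
          using e0(3)[of x] by (simp add: indicator_def)
      qed
      also have "\<dots> = p" using Bs by (simp add: p_def sets.Int_space_eq2)
      finally have Ip: "(\<integral>x. indicator (Q -` {m}) x * gA \<phi> A x \<partial>\<pi>) \<le> p" .
      show ?thesis
        unfolding e1(1) e0(1) pn_def[symmetric] p_def[symmetric]
        by (rule alg_bound[OF gI pdiff I0 Ip pnp pp])
    qed
    show ?thesis using tv_bound_const[OF A_bound] by blast
  qed
  show ?thesis
  proof (rule tendsto_sandwich[where f="\<lambda>_. 0" and h="\<lambda>n. 4 * \<delta> n / p"])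
    show "eventually (\<lambda>n. 0 \<le> tv_dist (pred_meas \<phi> m (\<pi>s n) (Qs n)) (pred_meas \<phi> m \<pi> Q)) sequentially"
      using ev by eventually_elim (use bound in blast)
    show "eventually (\<lambda>n. tv_dist (pred_meas \<phi> m (\<pi>s n) (Qs n)) (pred_meas \<phi> m \<pi> Q) \<le> 4 * \<delta> n / p) sequentially"
      using ev by eventually_elim (use bound in blast)
    show "(\<lambda>_. 0) \<longlonglongrightarrow> (0::real)" by simp
    have "(\<lambda>n. 4 * \<delta> n / p) \<longlonglongrightarrow> 4 * 0 / p"
      using pp by (intro tendsto_intros d0) simp
    then show "(\<lambda>n. 4 * \<delta> n / p) \<longlonglongrightarrow> 0" by simp
  qed
qed

end
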